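(* Let $\mathcal{X}\subseteq\mathbb{R}^n$, $\mathcal{Y}=\{0,1\}$, let $\mathcal{Z}$ be a set (the representation space), let $\mathcal{G}$ be a class of functions $g:\mathcal{X}\to\mathcal{Z}$ and $\mathcal{F}$ a class of functions $f:\mathcal{Z}\to\mathcal{Y}$. Let $p_S,p_T$ be probability distributions on $\mathcal{X}\times\mathcal{Y}$. Then for all $f\in\mathcal{F}$ and $g\in\mathcal{G}$, $$R_T(fg)\le R_S(fg)+d_{\mathcal{F}\Delta\mathcal{F}}\big(p_S^g(Z),p_T^g(Z)\big)+d_{\mathcal{F}_{\mathcal{G}\Delta\mathcal{G}}}(p_S,p_T)+\lambda_{\mathcal{F}\mathcal{G}}(g),$$ where $$\lambda_{\mathcal{F}\mathcal{G}}(g)=\inf_{f'\in\mathcal{F},\,g'\in\mathcal{G}}\Big[2R_S(f'g)+R_S(f'g')+R_T(f'g')\Big].$$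
   Context: $fg$ denotes the composition $f\circ g:\mathcal{X}\to\mathcal{Y}$. The loss $\ell$ is the zero-one loss $\ell(a,b)=\mathbf{1}[a\neq b]$. For a hypothesis $h:\mathcal{X}\to\mathcal{Y}$ and $D\in\{S,T\}$, the risk is $R_D(h)=\mathbb{E}_{(x,y)\sim p_D}[\ell(h(x),y)]$, and for two hypotheses $h,h'$ the disagreement is $R_D(h,h')=\mathbb{E}_{x\sim p_D}[\ell(h(x),h'(x))]$, where $x\sim p_D$ refers to the marginal of $p_D$ on $\mathcal{X}$. $p_S^g(Z)$, $p_T^g(Z)$ denote the distributions of $g(X)$ for $X$ drawn from the $\mathcal{X}$-marginal of $p_S$, resp. $p_T$. The latent divergence is $d_{\mathcal{F}\Delta\mathcal{F}}(p_S^g(Z),p_T^g(Z))=\sup_{f_1,f_2\in\mathcal{F}}|R_S(f_1g,f_2g)-R_T(f_1g,f_2g)|$. The $\mathcal{F}_{\mathcal{G}\Delta\mathcal{G}}$-divergence is $d_{\mathcal{F}_{\mathcal{G}\Delta\mathcal{G}}}(p_S,p_T)=\sup_{f\in\mathcal{F};\,g_1,g_2\in\mathcal{G}}|R_S(fg_1,fg_2)-R_T(fg_1,fg_2)|$. *)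

theory Defs
  imports "HOL-Probability.Probability"
begin

definition loss01 :: "'y \<Rightarrow> 'y \<Rightarrow> real" where
  "loss01 a b = (if a \<noteq> b then 1 else 0)"

definition risk :: "('x \<times> 'y) measure \<Rightarrow> ('x \<Rightarrow> 'y) \<Rightarrow> real" where
  "risk M h = (\<integral>p. loss01 (h (fst p)) (snd p) \<partial>M)"

definition marginal :: "'x measure \<Rightarrow> ('x \<times> 'y) measure \<Rightarrow> 'x measure" where
  "marginal MX M = distr M MX fst"

definition disagree :: "'x measure \<Rightarrow> ('x \<times> 'y) measure \<Rightarrow> ('x \<Rightarrow> 'y) \<Rightarrow> ('x \<Rightarrow> 'y) \<Rightarrow> real" where
  "disagree MX M h h' = (\<integral>x. loss01 (h x) (h' x) \<partial>(marginal MX M))"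

definition latent_div ::
  "'x measure \<Rightarrow> ('x \<times> 'y) measure \<Rightarrow> ('x \<times> 'y) measure \<Rightarrow> ('z \<Rightarrow> 'y) set \<Rightarrow> ('x \<Rightarrow> 'z) \<Rightarrow> real" where
  "latent_div MX pS pT F g =
     Sup {\<bar>disagree MX pS (f1 \<circ> g) (f2 \<circ> g) - disagree MX pT (f1 \<circ> g) (f2 \<circ> g)\<bar> | f1 f2. f1 \<in> F \<and> f2 \<in> F}"

definition FG_div ::
  "'x measure \<Rightarrow> ('x \<times> 'y) measure \<Rightarrow> ('x \<times> 'y) measure \<Rightarrow> ('z \<Rightarrow> 'y) set \<Rightarrow> ('x \<Rightarrow> 'z) set \<Rightarrow> real" where
  "FG_div MX pS pT F G =
     Sup {\<bar>disagree MX pS (f \<circ> g1) (f \<circ> g2) - disagree MX pT (f \<circ> g1) (f \<circ> g2)\<bar> | f g1 g2. f \<in> F \<and> g1 \<in> G \<and> g2 \<in> G}"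

definition lambda_FG ::
  "('x \<times> 'y) measure \<Rightarrow> ('x \<times> 'y) measure \<Rightarrow> ('z \<Rightarrow> 'y) set \<Rightarrow> ('x \<Rightarrow> 'z) set \<Rightarrow> ('x \<Rightarrow> 'z) \<Rightarrow> real" where
  "lambda_FG pS pT F G g =
     Inf {2 * risk pS (f' \<circ> g) + risk pS (f' \<circ> g') + risk pT (f' \<circ> g') | f' g'. f' \<in> F \<and> g' \<in> G}"

end

theory Submission
  imports Defs
begin

lemma loss01_sym: "loss01 a b = loss01 b a"
  by (auto simp: loss01_def)

lemma loss01_tri: "loss01 a c \<le> loss01 a b + loss01 b c"
  by (auto simp: loss01_def)

lemma loss01_meas:
  fixes u v :: "'a \<Rightarrow> bool"
  assumes "u \<in> measurable M (count_space UNIV)" "v \<in> measurable M (count_space UNIV)"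
  shows "(\<lambda>p. loss01 (u p) (v p)) \<in> borel_measurable M"
proof -
  have "\<And>i. (\<lambda>p. loss01 i (v p)) \<in> borel_measurable M"
    by (rule measurable_compose_countable[where f="\<lambda>j p. loss01 i j" for i, OF _ assms(2)]) simp
  then show ?thesis
    by (rule measurable_compose_countable[where f="\<lambda>i p. loss01 i (v p)", OF _ assms(1)])
qed

lemma loss01_int:
  fixes u v :: "'a \<Rightarrow> bool"
  assumes "prob_space M" "u \<in> measurable M (count_space UNIV)" "v \<in> measurable M (count_space UNIV)"
  shows "integrable M (\<lambda>p. loss01 (u p) (v p))"
proof -
  interpret prob_space M by fact
  show ?thesis
    by (rule integrable_const_bound[where B=1]) (auto intro!: loss01_meas assms, auto simp: loss01_def)
qed

lemma loss01_bounds: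
  fixes u v :: "'a \<Rightarrow> bool"
  assumes "prob_space M" "u \<in> measurable M (count_space UNIV)" "v \<in> measurable M (count_space UNIV)"
  shows "0 \<le> (\<integral>p. loss01 (u p) (v p) \<partial>M)" "(\<integral>p. loss01 (u p) (v p) \<partial>M) \<le> 1"
proof -
  interpret prob_space M by fact
  show "0 \<le> (\<integral>p. loss01 (u p) (v p) \<partial>M)"
    by (rule integral_nonneg_AE) (auto simp: loss01_def)
  have "(\<integral>p. loss01 (u p) (v p) \<partial>M) \<le> (\<integral>p. 1 \<partial>M)"
    by (rule integral_mono) (auto intro!: loss01_int assms, auto simp: loss01_def)
  then show "(\<integral>p. loss01 (u p) (v p) \<partial>M) \<le> 1" by (simp add: prob_space)
qed

lemma loss01_int_tri:
  fixes u v w :: "'a \<Rightarrow> bool"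
  assumes "prob_space M" "u \<in> measurable M (count_space UNIV)" "v \<in> measurable M (count_space UNIV)"
    "w \<in> measurable M (count_space UNIV)"
  shows "(\<integral>p. loss01 (u p) (w p) \<partial>M) \<le> (\<integral>p. loss01 (u p) (v p) \<partial>M) + (\<integral>p. loss01 (v p) (w p) \<partial>M)"
proof -
  have "(\<integral>p. loss01 (u p) (w p) \<partial>M) \<le> (\<integral>p. loss01 (u p) (v p) + loss01 (v p) (w p) \<partial>M)"
    by (rule integral_mono) (auto intro!: loss01_int assms Bochner_Integration.integrable_add loss01_tri)
  also have "\<dots> = (\<integral>p. loss01 (u p) (v p) \<partial>M) + (\<integral>p. loss01 (v p) (w p) \<partial>M)"
    by (rule Bochner_Integration.integral_add) (auto intro!: loss01_int assms)
  finally show ?thesis .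
qed

lemma disagree_eq:
  fixes h h' :: "'x \<Rightarrow> bool"
  assumes "sets M = sets (MX \<Otimes>\<^sub>M count_space UNIV)"
    "h \<in> measurable MX (count_space UNIV)" "h' \<in> measurable MX (count_space UNIV)"
  shows "disagree MX M h h' = (\<integral>p. loss01 (h (fst p)) (h' (fst p)) \<partial>M)"
proof -
  have fm: "fst \<in> measurable M MX"
    by (simp add: measurable_cong_sets[OF assms(1) refl])
  have "(\<lambda>x. loss01 (h x) (h' x)) \<in> borel_measurable MX"
  proof -
    have "\<And>i. (\<lambda>p. loss01 i (h' p)) \<in> borel_measurable MX"
      by (rule measurable_compose_countable[where f="\<lambda>j p. loss01 i j" for i, OF _ assms(3)]) simp
    then show ?thesis
      by (rule measurable_compose_countable[where f="\<lambda>i p. loss01 i (h' p)", OF _ assms(2)])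
  qed
  then show ?thesis
    unfolding disagree_def marginal_def
    by (subst integral_distr[OF fm]) auto
qed

theorem theorem4:
  fixes X :: "(real ^ 'n) set"
    and Z :: "'z set"
    and G :: "((real ^ 'n) \<Rightarrow> 'z) set"
    and F :: "('z \<Rightarrow> bool) set"
    and pS pT :: "((real ^ 'n) \<times> bool) measure"
    and f :: "'z \<Rightarrow> bool" and g :: "(real ^ 'n) \<Rightarrow> 'z"
  assumes G_maps: "\<forall>g\<in>G. \<forall>x\<in>X. g x \<in> Z"
    and probS: "prob_space pS"
    and probT: "prob_space pT"
    and setsS: "sets pS = sets (restrict_space borel X \<Otimes>\<^sub>M count_space UNIV)"
    and setsT: "sets pT = sets (restrict_space borel X \<Otimes>\<^sub>M count_space UNIV)"
    and meas: "\<forall>f\<in>F. \<forall>g\<in>G. (f \<circ> g) \<in> measurable (restrict_space borel X) (count_space UNIV)"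
    and f: "f \<in> F" and g: "g \<in> G"
  shows "risk pT (f \<circ> g) \<le> risk pS (f \<circ> g)
           + latent_div (restrict_space borel X) pS pT F g
           + FG_div (restrict_space borel X) pS pT F G
           + lambda_FG pS pT F G g"
proof -
  let ?MX = "restrict_space borel X"
  let ?L = "latent_div ?MX pS pT F g"
  let ?FG = "FG_div ?MX pS pT F G"
  have fstS: "fst \<in> measurable pS ?MX"
    by (simp add: measurable_cong_sets[OF setsS refl])
  have fstT: "fst \<in> measurable pT ?MX"
    by (simp add: measurable_cong_sets[OF setsT refl])
  have sndS: "snd \<in> measurable pS (count_space UNIV)"
    by (simp add: measurable_cong_sets[OF setsS refl])
  have sndT: "snd \<in> measurable pT (count_space UNIV)"
    by (simp add: measurable_cong_sets[OF setsT refl])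
  have mS: "(\<lambda>p. (f1 \<circ> g1) (fst p)) \<in> measurable pS (count_space UNIV)"
    if "f1 \<in> F" "g1 \<in> G" for f1 g1
    using measurable_comp[OF fstS, of "f1 \<circ> g1"] meas that by (auto simp: o_def)
  have mT: "(\<lambda>p. (f1 \<circ> g1) (fst p)) \<in> measurable pT (count_space UNIV)"
    if "f1 \<in> F" "g1 \<in> G" for f1 g1
    using measurable_comp[OF fstT, of "f1 \<circ> g1"] meas that by (auto simp: o_def)
  have dS: "disagree ?MX pS (f1 \<circ> g1) (f2 \<circ> g2) = (\<integral>p. loss01 ((f1 \<circ> g1) (fst p)) ((f2 \<circ> g2) (fst p)) \<partial>pS)"
    if "f1 \<in> F" "g1 \<in> G" "f2 \<in> F" "g2 \<in> G" for f1 g1 f2 g2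
    by (rule disagree_eq[OF setsS]) (use meas that in auto)
  have dT: "disagree ?MX pT (f1 \<circ> g1) (f2 \<circ> g2) = (\<integral>p. loss01 ((f1 \<circ> g1) (fst p)) ((f2 \<circ> g2) (fst p)) \<partial>pT)"
    if "f1 \<in> F" "g1 \<in> G" "f2 \<in> F" "g2 \<in> G" for f1 g1 f2 g2
    by (rule disagree_eq[OF setsT]) (use meas that in auto)
  have absb: "\<bar>disagree ?MX pS (f1 \<circ> g1) (f2 \<circ> g2) - disagree ?MX pT (f1 \<circ> g1) (f2 \<circ> g2)\<bar> \<le> 1"
    if "f1 \<in> F" "g1 \<in> G" "f2 \<in> F" "g2 \<in> G" for f1 g1 f2 g2
  proof -
    note a = loss01_bounds[OF probS mS[OF that(1,2)] mS[OF that(3,4)]]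
      loss01_bounds[OF probT mT[OF that(1,2)] mT[OF that(3,4)]]
    show ?thesis using a dS[OF that] dT[OF that] by (simp add: abs_le_iff)
  qed
  have Lb: "disagree ?MX pT (f1 \<circ> g) (f2 \<circ> g) \<le> disagree ?MX pS (f1 \<circ> g) (f2 \<circ> g) + ?L"
    if "f1 \<in> F" "f2 \<in> F" for f1 f2
  proof -
    have "\<bar>disagree ?MX pS (f1 \<circ> g) (f2 \<circ> g) - disagree ?MX pT (f1 \<circ> g) (f2 \<circ> g)\<bar> \<le> ?L"
      unfolding latent_div_def
      by (rule cSup_upper) (use that g absb in \<open>auto intro!: bdd_aboveI[where M=1]\<close>)
    then show ?thesis by simp
  qed
  have FGb: "disagree ?MX pT (f1 \<circ> g1) (f1 \<circ> g2) \<le> disagree ?MX pS (f1 \<circ> g1) (f1 \<circ> g2) + ?FG"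
    if "f1 \<in> F" "g1 \<in> G" "g2 \<in> G" for f1 g1 g2
  proof -
    have "\<bar>disagree ?MX pS (f1 \<circ> g1) (f1 \<circ> g2) - disagree ?MX pT (f1 \<circ> g1) (f1 \<circ> g2)\<bar> \<le> ?FG"
      unfolding FG_div_def
      by (rule cSup_upper) (use that absb in \<open>auto intro!: bdd_aboveI[where M=1]\<close>)
    then show ?thesis by simp
  qed
  have key: "risk pT (f \<circ> g) - risk pS (f \<circ> g) - ?L - ?FG
      \<le> 2 * risk pS (f' \<circ> g) + risk pS (f' \<circ> g') + risk pT (f' \<circ> g')"
    if f': "f' \<in> F" and g': "g' \<in> G" for f' g'
  proof -
    have t1: "risk pT (f \<circ> g) \<le> disagree ?MX pT (f \<circ> g) (f' \<circ> g) + risk pT (f' \<circ> g)"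
      unfolding risk_def dT[OF f g f' g]
      by (rule loss01_int_tri[OF probT mT[OF f g] mT[OF f' g] sndT])
    have t2: "risk pT (f' \<circ> g) \<le> disagree ?MX pT (f' \<circ> g) (f' \<circ> g') + risk pT (f' \<circ> g')"
      unfolding risk_def dT[OF f' g f' g']
      by (rule loss01_int_tri[OF probT mT[OF f' g] mT[OF f' g'] sndT])
    have s1: "disagree ?MX pS (f \<circ> g) (f' \<circ> g) \<le> risk pS (f \<circ> g) + risk pS (f' \<circ> g)"
    proof -
      have "disagree ?MX pS (f \<circ> g) (f' \<circ> g) \<le> risk pS (f \<circ> g) + (\<integral>p. loss01 (snd p) ((f' \<circ> g) (fst p)) \<partial>pS)"
        unfolding risk_def dS[OF f g f' g]
        by (rule loss01_int_tri[OF probS mS[OF f g] sndS mS[OF f' g]])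
      then show ?thesis by (simp add: risk_def loss01_sym)
    qed
    have s2: "disagree ?MX pS (f' \<circ> g) (f' \<circ> g') \<le> risk pS (f' \<circ> g) + risk pS (f' \<circ> g')"
    proof -
      have "disagree ?MX pS (f' \<circ> g) (f' \<circ> g') \<le> risk pS (f' \<circ> g) + (\<integral>p. loss01 (snd p) ((f' \<circ> g') (fst p)) \<partial>pS)"
        unfolding risk_def dS[OF f' g f' g']
        by (rule loss01_int_tri[OF probS mS[OF f' g] sndS mS[OF f' g']])
      then show ?thesis by (simp add: risk_def loss01_sym)
    qed
    show ?thesis using t1 t2 s1 s2 Lb[OF f f'] FGb[OF f' g g'] by linarith
  qed
  have "risk pT (f \<circ> g) - risk pS (f \<circ> g) - ?L - ?FG \<le> lambda_FG pS pT F G g"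
    unfolding lambda_FG_def
    by (rule cInf_greatest) (use f g key in auto)
  then show ?thesis by linarith
qed

end
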